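(* Let $n\ge2$. As real vector spaces, $J\mathcal{E}=\mathcal{N}_0\oplus J\mathcal{P}$.
   Context: Realize the unit sphere $S^{2n-1}$ near the point $e_0$ in Siegel form: coordinates $(w',w_n)\in\mathbb{C}^{n-1}\times\mathbb{C}$, the sphere is $2\operatorname{Re}w_n=|w'|^2$, $e_0=0$, and $(w',v)$ with $v=\operatorname{Im}w_n$ are local coordinates on it. $J\mathcal{E}$ is the space of $\infty$-jets at $e_0$ of real smooth functions, i.e. real formal power series in $(w',\bar w',v)$. $J\mathcal{P}\subset J\mathcal{E}$ is the subspace of jets of CR pluriharmonic functions, i.e. formal series of the form $\operatorname{Re}\sum_{\alpha\in\mathbb{N}^{n-1},\,l\ge0}A^l_\alpha\,{w'}^\alpha(|w'|^2+2iv)^l$ with $A^l_\alpha\in\mathbb{C}$. Write $f\in J\mathcal{E}$ as $f=\sum_{p,q\ge0}A_{p,q}(v)$ with $A_{p,q}(v)=\sum_{|\alpha|=p,|\beta|=q,l\ge0}A^l_{\alpha\bar\beta}{w'}^\alpha\bar w'^\beta v^l$. Let $\Delta'=\sum_{j=1}^{n-1}\partial_{w_j}\partial_{\bar w_j}$. $\mathcal{N}_0\subset J\mathcal{E}$ is the subspace defined by $A_{p,q}=0$ whenever $\min(p,q)=0$, and $\Delta'A_{1,1}=0$. *)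

theory Defs
  imports "HOL-Analysis.Analysis"
begin

text \<open>
  A jet (formal power series in w', conj w', v) is represented by its coefficient
  function: f a b l is the coefficient of w'^a (conj w')^b v^l, where the multi-indices
  a, b :: nat => nat are supported in the index set {..< n-1} (coordinates w_0..w_(n-2)).
\<close>

type_synonym jet = "(nat \<Rightarrow> nat) \<Rightarrow> (nat \<Rightarrow> nat) \<Rightarrow> nat \<Rightarrow> complex"

definition vidx :: "nat \<Rightarrow> (nat \<Rightarrow> nat) \<Rightarrow> bool" where
  "vidx n a \<longleftrightarrow> (\<forall>i. n - 1 \<le> i \<longrightarrow> a i = 0)"

definition jzero :: jet where
  "jzero = (\<lambda>a b l. 0)"

definition jadd :: "jet \<Rightarrow> jet \<Rightarrow> jet" where
  "jadd f g = (\<lambda>a b l. f a b l + g a b l)"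

definition jscale :: "complex \<Rightarrow> jet \<Rightarrow> jet" where
  "jscale c f = (\<lambda>a b l. c * f a b l)"

text \<open>Real jets: real-valued formal series, i.e. conjugate-symmetric coefficients.\<close>
definition JE :: "nat \<Rightarrow> jet set" where
  "JE n = {f. (\<forall>a b l. f a b l \<noteq> 0 \<longrightarrow> vidx n a \<and> vidx n b)
             \<and> (\<forall>a b l. f b a l = cnj (f a b l))}"

definition jmono :: "(nat \<Rightarrow> nat) \<Rightarrow> (nat \<Rightarrow> nat) \<Rightarrow> nat \<Rightarrow> jet" where
  "jmono a0 b0 l0 = (\<lambda>a b l. if a = a0 \<and> b = b0 \<and> l = l0 then 1 else 0)"

definition jmul :: "jet \<Rightarrow> jet \<Rightarrow> jet" where
  "jmul f g = (\<lambda>a b l. \<Sum>a1\<in>{a1. a1 \<le> a}. \<Sum>b1\<in>{b1. b1 \<le> b}. \<Sum>l1\<le>l.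
       f a1 b1 l1 * g (\<lambda>i. a i - a1 i) (\<lambda>i. b i - b1 i) (l - l1))"

primrec jpow :: "jet \<Rightarrow> nat \<Rightarrow> jet" where
  "jpow f 0 = jmono (\<lambda>_. 0) (\<lambda>_. 0) 0"
| "jpow f (Suc k) = jmul f (jpow f k)"

definition unitidx :: "nat \<Rightarrow> nat \<Rightarrow> nat" where
  "unitidx j = (\<lambda>i. if i = j then 1 else 0)"

definition sqnorm :: "nat \<Rightarrow> jet" where
  "sqnorm n = (\<lambda>a b l. \<Sum>j<n - 1. jmono (unitidx j) (unitidx j) 0 a b l)"

definition hterm :: "nat \<Rightarrow> (nat \<Rightarrow> nat) \<Rightarrow> nat \<Rightarrow> jet" where
  "hterm n \<alpha> k = jmul (jmono \<alpha> (\<lambda>_. 0) 0)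
      (jpow (jadd (sqnorm n) (jscale (2 * \<i>) (jmono (\<lambda>_. 0) (\<lambda>_. 0) 1))) k)"

text \<open>Formal sum  sum_{alpha,k} A^k_alpha w'^alpha (|w'|^2+2iv)^k, taken coefficientwise
  (for each monomial only finitely many terms contribute).\<close>
definition hser :: "nat \<Rightarrow> ((nat \<Rightarrow> nat) \<Rightarrow> nat \<Rightarrow> complex) \<Rightarrow> jet" where
  "hser n A = (\<lambda>a b l. \<Sum>\<^sub>\<infinity>(\<alpha>, k)\<in>{(\<alpha>, k). vidx n \<alpha>}. A \<alpha> k * hterm n \<alpha> k a b l)"

text \<open>Real part of a formal series (v is real, conj exchanges w' and conj w').\<close>
definition jRe :: "jet \<Rightarrow> jet" where
  "jRe g = (\<lambda>a b l. (g a b l + cnj (g b a l)) / 2)"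

definition JP :: "nat \<Rightarrow> jet set" where
  "JP n = {jRe (hser n A) | A. True}"

definition jpart :: "nat \<Rightarrow> nat \<Rightarrow> nat \<Rightarrow> jet \<Rightarrow> jet" where
  "jpart n p q f = (\<lambda>a b l. if sum a {..<n - 1} = p \<and> sum b {..<n - 1} = q then f a b l else 0)"

definition dw :: "nat \<Rightarrow> jet \<Rightarrow> jet" where
  "dw j f = (\<lambda>a b l. of_nat (a j + 1) * f (a(j := a j + 1)) b l)"

definition dwb :: "nat \<Rightarrow> jet \<Rightarrow> jet" where
  "dwb j f = (\<lambda>a b l. of_nat (b j + 1) * f a (b(j := b j + 1)) l)"

definition lap' :: "nat \<Rightarrow> jet \<Rightarrow> jet" where
  "lap' n f = (\<lambda>a b l. \<Sum>j<n - 1. dw j (dwb j f) a b l)"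

definition N0 :: "nat \<Rightarrow> jet set" where
  "N0 n = {f \<in> JE n. (\<forall>p q. min p q = 0 \<longrightarrow> jpart n p q f = jzero)
                    \<and> lap' n (jpart n 1 1 f) = jzero}"

definition real_subspace :: "jet set \<Rightarrow> bool" where
  "real_subspace S \<longleftrightarrow> jzero \<in> S \<and> (\<forall>f\<in>S. \<forall>g\<in>S. jadd f g \<in> S)
      \<and> (\<forall>c::real. \<forall>f\<in>S. jscale (complex_of_real c) f \<in> S)"

end

theory Submission
  imports Defs
begin

lemma jmul_nonzero:
  assumes "jmul f g a b l \<noteq> 0"
  shows "\<exists>a1 b1 l1. a1 \<le> a \<and> b1 \<le> b \<and> l1 \<le> l \<and> f a1 b1 l1 \<noteq> 0 \<and>
           g (\<lambda>i. a i - a1 i) (\<lambda>i. b i - b1 i) (l - l1) \<noteq> 0"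
proof (rule ccontr)
  assume "\<not> ?thesis"
  hence "jmul f g a b l = 0" unfolding jmul_def
    by (auto intro!: sum.neutral)
  with assms show False by simp
qed

lemma vidx_finite_le:
  assumes "vidx n a" shows "finite {a1. a1 \<le> a}"
proof -
  let ?A = "{..<n-1}" and ?B = "{0..sum a {..<n-1}}"
  have "{a1. a1 \<le> a} \<subseteq> {f. \<forall>x. (x \<in> ?A \<longrightarrow> f x \<in> ?B) \<and> (x \<notin> ?A \<longrightarrow> f x = 0)}"
  proof (intro subsetI CollectI allI conjI impI)
    fix f x assume "f \<in> {a1. a1 \<le> a}" "x \<in> ?A"
    hence "f x \<le> a x" by (simp add: le_fun_def)
    also have "a x \<le> sum a {..<n-1}" using \<open>x \<in> ?A\<close> by (intro member_le_sum) auto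
    finally show "f x \<in> ?B" by simp
  next
    fix f x assume "f \<in> {a1. a1 \<le> a}" "x \<notin> ?A"
    thus "f x = 0" using assms unfolding vidx_def le_fun_def by (metis le_zero_eq lessThan_iff mem_Collect_eq not_le)
  qed
  moreover have "finite {f. \<forall>x. (x \<in> ?A \<longrightarrow> f x \<in> ?B) \<and> (x \<notin> ?A \<longrightarrow> f x = (0::nat))}"
    by (rule finite_set_of_finite_funs) auto
  ultimately show ?thesis by (rule finite_subset)
qed

lemma triple_delta:
  fixes F :: "'a \<Rightarrow> 'b \<Rightarrow> 'c \<Rightarrow> 'd::comm_monoid_add"
  assumes "finite A" "finite B" "finite C"
  shows "(\<Sum>x\<in>A. \<Sum>y\<in>B. \<Sum>z\<in>C. if x = x0 \<and> y = y0 \<and> z = z0 then F x y z else 0)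
    = (if x0\<in>A \<and> y0\<in>B \<and> z0\<in>C then F x0 y0 z0 else 0)"
proof -
  have "(\<Sum>x\<in>A. \<Sum>y\<in>B. \<Sum>z\<in>C. if x = x0 \<and> y = y0 \<and> z = z0 then F x y z else 0)
     = (\<Sum>x\<in>A. if x = x0 then (\<Sum>y\<in>B. if y = y0 then (\<Sum>z\<in>C. if z = z0 then F x y z else 0) else 0) else 0)"
  proof (intro sum.cong refl)
    fix x assume "x \<in> A"
    show "(\<Sum>y\<in>B. \<Sum>z\<in>C. if x = x0 \<and> y = y0 \<and> z = z0 then F x y z else 0) =
      (if x = x0 then (\<Sum>y\<in>B. if y = y0 then (\<Sum>z\<in>C. if z = z0 then F x y z else 0) else 0) else 0)"
      by (cases "x = x0") (auto intro!: sum.cong sum.neutral)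
  qed
  also have "\<dots> = (if x0\<in>A \<and> y0\<in>B \<and> z0\<in>C then F x0 y0 z0 else 0)"
    using assms by (simp add: sum.delta')
  finally show ?thesis .
qed

lemma jmul_jmono:
  assumes "finite {a1. a1 \<le> a}" "finite {b1. b1 \<le> b}"
  shows "jmul (jmono \<alpha> \<beta> m) g a b l =
    (if \<alpha> \<le> a \<and> \<beta> \<le> b \<and> m \<le> l then g (\<lambda>i. a i - \<alpha> i) (\<lambda>i. b i - \<beta> i) (l - m) else 0)"
proof -
  have "jmul (jmono \<alpha> \<beta> m) g a b l = (\<Sum>a1\<in>{a1. a1 \<le> a}. \<Sum>b1\<in>{b1. b1 \<le> b}. \<Sum>l1\<in>{..l}. 
     if a1 = \<alpha> \<and> b1 = \<beta> \<and> l1 = m then g (\<lambda>i. a i - a1 i) (\<lambda>i. b i - b1 i) (l - l1) else 0)"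
    unfolding jmul_def jmono_def by (intro sum.cong refl) auto
  also have "\<dots> = (if \<alpha> \<le> a \<and> \<beta> \<le> b \<and> m \<le> l then g (\<lambda>i. a i - \<alpha> i) (\<lambda>i. b i - \<beta> i) (l - m) else 0)"
    by (subst triple_delta) (use assms in auto)
  finally show ?thesis .
qed

lemma jmul_jadd: "jmul (jadd f g) h = jadd (jmul f h) (jmul g h)"
  unfolding jmul_def jadd_def by (simp add: distrib_right sum.distrib)

lemma jmul_jscale: "jmul (jscale c f) h = jscale c (jmul f h)"
  unfolding jmul_def jscale_def by (simp add: sum_distrib_left mult.assoc)

lemma jmul_jzero: "jmul (\<lambda>a b l. 0) h = (\<lambda>a b l. 0)"
  unfolding jmul_def by simp

lemma jmul_sum: "finite J \<Longrightarrow> jmul (\<lambda>a b l. \<Sum>j\<in>J. F j a b l) h a b l = (\<Sum>j\<in>J. jmul (F j) h a b l)"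
proof (induction J rule: finite_induct)
  case empty then show ?case by (simp add: jmul_jzero)
next
  case (insert x J)
  have "(\<lambda>a b l. \<Sum>j\<in>insert x J. F j a b l) = jadd (F x) (\<lambda>a b l. \<Sum>j\<in>J. F j a b l)"
    using insert by (simp add: jadd_def)
  hence "jmul (\<lambda>a b l. \<Sum>j\<in>insert x J. F j a b l) h a b l = jmul (jadd (F x) (\<lambda>a b l. \<Sum>j\<in>J. F j a b l)) h a b l"
    by (simp only:)
  also have "\<dots> = jmul (F x) h a b l + (\<Sum>j\<in>J. jmul (F j) h a b l)"
    unfolding jmul_jadd using insert.IH by (simp add: jadd_def)
  finally show ?case using insert by simp
qed

definition uu :: "nat \<Rightarrow> jet" where
  "uu n = jadd (sqnorm n) (jscale (2 * \<i>) (jmono (\<lambda>_. 0) (\<lambda>_. 0) 1))"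

definition PP :: "nat \<Rightarrow> nat \<Rightarrow> jet" where
  "PP n k = jpow (uu n) k"

lemma hterm_PP: "hterm n \<alpha> k = jmul (jmono \<alpha> (\<lambda>_. 0) 0) (PP n k)"
  unfolding hterm_def PP_def uu_def by simp

lemma sum_unitidx: "j < N \<Longrightarrow> sum (unitidx j) {..<N} = 1"
  unfolding unitidx_def by (simp add: sum.delta)

lemma vidx_unitidx: "j < n - 1 \<Longrightarrow> vidx n (unitidx j)"
  unfolding vidx_def unitidx_def by auto

lemma unitidx_le_iff: "unitidx i \<le> unitidx j \<longleftrightarrow> i = j"
  unfolding unitidx_def le_fun_def by (metis le_zero_eq one_neq_zero order_refl)

lemma unitidx_not_le0: "\<not> unitidx j \<le> (\<lambda>_. 0)"
  unfolding unitidx_def le_fun_def by (metis le_zero_eq one_neq_zero)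

lemma unitidx_ne0: "unitidx j \<noteq> (\<lambda>_. 0)"
  by (metis unitidx_not_le0 order_refl)

lemma vidx_zero: "vidx n (\<lambda>_. 0)"
  unfolding vidx_def by simp

lemma vidx_sum0: "vidx n a \<Longrightarrow> sum a {..<n-1} = 0 \<Longrightarrow> a = (\<lambda>_. 0)"
  unfolding vidx_def by (rule ext) (metis lessThan_iff not_le finite_lessThan sum_eq_0_iff)

lemma uu_support:
  assumes "uu n a b l \<noteq> 0"
  shows "a = b \<and> vidx n a \<and> sum a {..<n-1} + l = 1"
proof (cases "sqnorm n a b l = 0")
  case True
  with assms have "jmono (\<lambda>_. 0) (\<lambda>_. 0) 1 a b l \<noteq> 0"
    unfolding uu_def jadd_def jscale_def by auto
  then show ?thesis unfolding jmono_def by (auto simp: vidx_zero split: if_splits)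
next
  case False
  then obtain j where j: "j < n - 1" "jmono (unitidx j) (unitidx j) 0 a b l \<noteq> 0"
    unfolding sqnorm_def by (meson lessThan_iff sum.not_neutral_contains_not_neutral)
  then show ?thesis unfolding jmono_def by (auto simp: vidx_unitidx sum_unitidx split: if_splits)
qed

lemma PP_support:
  "PP n k a b l \<noteq> 0 \<Longrightarrow> a = b \<and> vidx n a \<and> sum a {..<n-1} + l = k"
proof (induction k arbitrary: a b l)
  case 0
  then show ?case by (auto simp: PP_def jmono_def vidx_zero split: if_splits)
next
  case (Suc k)
  have "jmul (uu n) (PP n k) a b l \<noteq> 0" using Suc.prems by (simp add: PP_def)
  then obtain a1 b1 l1 where h: "a1 \<le> a" "b1 \<le> b" "l1 \<le> l" "uu n a1 b1 l1 \<noteq> 0"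
     "PP n k (\<lambda>i. a i - a1 i) (\<lambda>i. b i - b1 i) (l - l1) \<noteq> 0"
    using jmul_nonzero by blast
  note u = uu_support[OF h(4)]
  note p = Suc.IH[OF h(5)]
  have ea: "a = (\<lambda>i. a1 i + (a i - a1 i))" using h(1) by (auto simp: le_fun_def)
  have eb: "b = (\<lambda>i. b1 i + (b i - b1 i))" using h(2) by (auto simp: le_fun_def)
  have "a = b" using u p by (subst ea, subst eb) (simp add: fun_eq_iff)
  moreover have "vidx n a" unfolding vidx_def
  proof (intro allI impI)
    fix i assume "n - 1 \<le> i"
    hence "a1 i = 0" "a i - a1 i = 0" using u p unfolding vidx_def by auto
    thus "a i = 0" by simp
  qed
  moreover have "sum a {..<n-1} + l = Suc k"
  proof -
    have "sum a {..<n-1} = sum a1 {..<n-1} + sum (\<lambda>i. a i - a1 i) {..<n-1}"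
      by (subst ea) (simp add: sum.distrib)
    moreover have "sum a1 {..<n-1} + l1 = 1" using u by blast
    moreover have "sum (\<lambda>i. a i - a1 i) {..<n-1} + (l - l1) = k" using p by simp
    ultimately show ?thesis using h(3) by linarith
  qed
  ultimately show ?case by blast
qed

lemma PP_rec:
  assumes "vidx n a" "vidx n b"
  shows "PP n (Suc k) a b l = (\<Sum>j<n-1. if unitidx j \<le> a \<and> unitidx j \<le> b then
      PP n k (\<lambda>i. a i - unitidx j i) (\<lambda>i. b i - unitidx j i) l else 0)
    + 2 * \<i> * (if 1 \<le> l then PP n k a b (l - 1) else 0)"
proof -
  have fa: "finite {a1. a1 \<le> a}" "finite {b1. b1 \<le> b}" using assms vidx_finite_le by auto
  have "PP n (Suc k) a b l = jmul (uu n) (PP n k) a b l" by (simp add: PP_def)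
  also have "\<dots> = jmul (sqnorm n) (PP n k) a b l + 2 * \<i> * jmul (jmono (\<lambda>_. 0) (\<lambda>_. 0) 1) (PP n k) a b l"
    unfolding uu_def jmul_jadd jmul_jscale by (simp add: jadd_def jscale_def)
  also have "jmul (sqnorm n) (PP n k) a b l = (\<Sum>j<n-1. jmul (jmono (unitidx j) (unitidx j) 0) (PP n k) a b l)"
    unfolding sqnorm_def by (rule jmul_sum) simp
  finally show ?thesis using fa by (simp add: jmul_jmono le_fun_def cong: if_cong)
qed

lemma PP00: "PP n k (\<lambda>_. 0) (\<lambda>_. 0) l = (if k = l then (2 * \<i>) ^ l else 0)"
proof (induction k arbitrary: l)
  case 0
  then show ?case by (simp add: PP_def jmono_def)
next
  case (Suc k)
  have "PP n (Suc k) (\<lambda>_. 0) (\<lambda>_. 0) l = 2 * \<i> * (if 1 \<le> l then PP n k (\<lambda>_. 0) (\<lambda>_. 0) (l - 1) else 0)"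
    by (simp add: PP_rec vidx_zero unitidx_not_le0)
  then show ?case using Suc.IH by (cases l) auto
qed

lemma PPee:
  assumes "j < n - 1"
  shows "PP n k (unitidx j) (unitidx j) l = (if k = Suc l then of_nat k * (2 * \<i>) ^ l else 0)"
proof (induction k arbitrary: l)
  case 0
  then show ?case by (simp add: PP_def jmono_def unitidx_ne0)
next
  case (Suc k)
  have e: "(\<lambda>i. unitidx j i - unitidx j i) = (\<lambda>_. 0)" by simp
  have "PP n (Suc k) (unitidx j) (unitidx j) l = (\<Sum>j'<n-1. if j' = j then PP n k (\<lambda>_. 0) (\<lambda>_. 0) l else 0)
      + 2 * \<i> * (if 1 \<le> l then PP n k (unitidx j) (unitidx j) (l - 1) else 0)"
    using assms by (simp add: PP_rec vidx_unitidx unitidx_le_iff e cong: if_cong)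
  also have "\<dots> = PP n k (\<lambda>_. 0) (\<lambda>_. 0) l + 2 * \<i> * (if 1 \<le> l then PP n k (unitidx j) (unitidx j) (l - 1) else 0)"
    using assms by (simp add: sum.delta)
  finally have r: "PP n (Suc k) (unitidx j) (unitidx j) l = \<dots>" .
  show ?case
  proof (cases l)
    case 0
    then show ?thesis using r by (simp add: PP00)
  next
    case (Suc m)
    then show ?thesis using r Suc.IH[of m] by (auto simp: PP00 algebra_simps)
  qed
qed

lemma hterm_val:
  assumes "vidx n a" "vidx n b"
  shows "hterm n \<alpha> k a b l = (if \<alpha> \<le> a then PP n k (\<lambda>i. a i - \<alpha> i) b l else 0)"
  using assms vidx_finite_le[OF assms(1)] vidx_finite_le[OF assms(2)]
  by (simp add: hterm_PP jmul_jmono le_fun_def)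

lemma hterm_support:
  assumes "hterm n \<alpha> k a b l \<noteq> 0"
  shows "\<alpha> \<le> a \<and> (\<lambda>i. a i - \<alpha> i) = b \<and> vidx n b \<and> sum b {..<n-1} + l = k"
proof -
  obtain a1 b1 l1 where h: "a1 \<le> a" "b1 \<le> b" "l1 \<le> l" "jmono \<alpha> (\<lambda>_. 0) 0 a1 b1 l1 \<noteq> 0"
     "PP n k (\<lambda>i. a i - a1 i) (\<lambda>i. b i - b1 i) (l - l1) \<noteq> 0"
    using jmul_nonzero assms unfolding hterm_PP by blast
  from h(4) have "a1 = \<alpha>" "b1 = (\<lambda>_. 0)" "l1 = 0" by (auto simp: jmono_def split: if_splits)
  with h(1,5) PP_support show ?thesis by fastforce
qed

lemma hser_eq:
  "hser n A a b l = (if vidx n (\<lambda>i. a i - b i) then A (\<lambda>i. a i - b i) (sum b {..<n-1} + l)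
      * hterm n (\<lambda>i. a i - b i) (sum b {..<n-1} + l) a b l else 0)"
proof -
  define c where "c = ((\<lambda>i. a i - b i), sum b {..<n-1} + l)"
  define I :: "((nat \<Rightarrow> nat) \<times> nat) set" where "I = {(\<alpha>, k). vidx n \<alpha>}"
  define F where "F = (\<lambda>(\<alpha>, k). A \<alpha> k * hterm n \<alpha> k a b l)"
  have z: "F x = 0" if "x \<noteq> c" for x
  proof (rule ccontr)
    obtain \<alpha> k where x: "x = (\<alpha>, k)" by (cases x)
    assume "F x \<noteq> 0"
    hence "hterm n \<alpha> k a b l \<noteq> 0" by (simp add: F_def x)
    note s = hterm_support[OF this]
    have "\<alpha> = (\<lambda>i. a i - b i)"
    proof
      fix i
      have "\<alpha> i \<le> a i" using s by (simp add: le_fun_def)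
      moreover have "a i - \<alpha> i = b i" using s by (metis)
      ultimately show "\<alpha> i = a i - b i" by linarith
    qed
    hence "x = c" using s by (simp add: x c_def)
    with that show False by simp
  qed
  have "hser n A a b l = infsum F I" unfolding hser_def F_def I_def by simp
  also have "\<dots> = infsum F (I \<inter> {c})"
    by (rule infsum_cong_neutral) (auto intro: z)
  also have "\<dots> = (if c \<in> I then F c else 0)" by auto
  finally show ?thesis by (simp add: c_def I_def F_def)
qed

lemma unitidx_upd: "(\<lambda>_. 0::nat)(j := Suc 0) = unitidx j"
  unfolding unitidx_def by (rule ext) simp

lemma G1: "vidx n a \<Longrightarrow> hser n A a (\<lambda>_. 0) l = A a l * (2 * \<i>) ^ l"
  by (simp add: hser_eq hterm_val vidx_zero PP00)

lemma G2: 
  assumes "a \<noteq> (\<lambda>_. 0)" shows "hser n A (\<lambda>_. 0) a l = 0"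
proof -
  have "hterm n (\<lambda>i. 0 - a i) (sum a {..<n-1} + l) (\<lambda>_. 0) a l = 0"
  proof (rule ccontr)
    assume "\<not> ?thesis"
    from hterm_support[OF this] have "(\<lambda>i. 0 - (0 - a i)) = a" by blast
    hence "a = (\<lambda>_. 0)" by simp
    with assms show False by simp
  qed
  thus ?thesis by (simp add: hser_eq)
qed

lemma G3: "j < n - 1 \<Longrightarrow> hser n A (unitidx j) (unitidx j) l = A (\<lambda>_. 0) (Suc l) * (of_nat (Suc l) * (2 * \<i>) ^ l)"
  by (simp add: hser_eq hterm_val vidx_zero vidx_unitidx sum_unitidx PPee le_fun_def)

lemma G4: 
  assumes "hser n A a b l \<noteq> 0" shows "vidx n a \<and> vidx n b"
proof -
  have v: "vidx n (\<lambda>i. a i - b i)" and hz: "hterm n (\<lambda>i. a i - b i) (sum b {..<n-1} + l) a b l \<noteq> 0"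
    using assms by (auto simp: hser_eq split: if_splits)
  note s = hterm_support[OF hz]
  have "b \<le> a" unfolding le_fun_def
  proof
    fix i have "a i - (a i - b i) = b i" using s by metis
    thus "b i \<le> a i" by linarith
  qed
  have "vidx n a" unfolding vidx_def
  proof (intro allI impI)
    fix i assume "n - 1 \<le> i"
    hence "a i - b i = 0" "b i = 0" using v s unfolding vidx_def by auto
    thus "a i = 0" by simp
  qed
  thus ?thesis using s by blast
qed

lemma hser_add: "hser n (\<lambda>\<alpha> k. A \<alpha> k + B \<alpha> k) = jadd (hser n A) (hser n B)"
  by (rule ext)+ (simp add: hser_eq jadd_def distrib_right)

lemma hser_scale: "hser n (\<lambda>\<alpha> k. c * A \<alpha> k) = jscale c (hser n A)"
  by (rule ext)+ (simp add: hser_eq jscale_def)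

lemma hser_zero: "hser n (\<lambda>\<alpha> k. 0) = jzero"
  by (rule ext)+ (simp add: hser_eq jzero_def)

lemma jRe_add: "jRe (jadd f g) = jadd (jRe f) (jRe g)"
  unfolding jRe_def jadd_def by (rule ext)+ (simp add: add_divide_distrib)

lemma jRe_scale: "jRe (jscale (complex_of_real c) f) = jscale (complex_of_real c) (jRe f)"
  unfolding jRe_def jscale_def by (rule ext)+ (simp add: algebra_simps)

lemma jRe_zero: "jRe jzero = jzero"
  unfolding jRe_def jzero_def by simp

lemma JP_JE: "jRe (hser n A) \<in> JE n"
proof -
  have 1: "vidx n a \<and> vidx n b" if "jRe (hser n A) a b l \<noteq> 0" for a b l
  proof -
    have "hser n A a b l \<noteq> 0 \<or> hser n A b a l \<noteq> 0" using that unfolding jRe_def by auto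
    thus ?thesis using G4 by blast
  qed
  have 2: "jRe (hser n A) b a l = cnj (jRe (hser n A) a b l)" for a b l
    unfolding jRe_def by (simp add: add.commute)
  show ?thesis unfolding JE_def using 1 2 by blast
qed

lemma jpart_add: "jpart n p q (jadd f g) = jadd (jpart n p q f) (jpart n p q g)"
  unfolding jpart_def jadd_def by (rule ext)+ simp

lemma jpart_scale: "jpart n p q (jscale c f) = jscale c (jpart n p q f)"
  unfolding jpart_def jscale_def by (rule ext)+ simp

lemma lap_add: "lap' n (jadd f g) = jadd (lap' n f) (lap' n g)"
  unfolding lap'_def dw_def dwb_def jadd_def by (rule ext)+ (simp add: sum.distrib distrib_left)

lemma lap_scale: "lap' n (jscale c f) = jscale c (lap' n f)"
  unfolding lap'_def dw_def dwb_def jscale_def by (rule ext)+ (simp add: sum_distrib_left mult.left_commute)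

lemma JE_zero: "jzero \<in> JE n"
  unfolding JE_def jzero_def by simp

lemma JE_add: assumes "f \<in> JE n" "g \<in> JE n" shows "jadd f g \<in> JE n"
proof -
  have 1: "vidx n a \<and> vidx n b" if "jadd f g a b l \<noteq> 0" for a b l
  proof -
    have "f a b l \<noteq> 0 \<or> g a b l \<noteq> 0" using that unfolding jadd_def by auto
    thus ?thesis using assms unfolding JE_def by blast
  qed
  have 2: "jadd f g b a l = cnj (jadd f g a b l)" for a b l
  proof -
    have sf: "f b a l = cnj (f a b l)" and sg: "g b a l = cnj (g a b l)"
      using assms unfolding JE_def by blast+
    show ?thesis unfolding jadd_def by (simp only: sf sg complex_cnj_add)
  qed
  show ?thesis unfolding JE_def using 1 2 by blast
qed

lemma JE_scale: assumes "f \<in> JE n" shows "jscale (complex_of_real c) f \<in> JE n"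
proof -
  have 1: "vidx n a \<and> vidx n b" if "jscale (complex_of_real c) f a b l \<noteq> 0" for a b l
  proof -
    have "f a b l \<noteq> 0" using that unfolding jscale_def by auto
    thus ?thesis using assms unfolding JE_def by blast
  qed
  have 2: "jscale (complex_of_real c) f b a l = cnj (jscale (complex_of_real c) f a b l)" for a b l
  proof -
    have sf: "f b a l = cnj (f a b l)" using assms unfolding JE_def by blast
    show ?thesis unfolding jscale_def by (simp only: sf complex_cnj_mult complex_cnj_complex_of_real)
  qed
  show ?thesis unfolding JE_def using 1 2 by blast
qed

lemma JE_sub: "real_subspace (JE n)"
  unfolding real_subspace_def using JE_zero JE_add JE_scale by blast

lemma N0_D:
  assumes "f \<in> N0 n"
  shows "f a (\<lambda>_. 0) l = 0" "(\<Sum>j<n-1. f (unitidx j) (unitidx j) l) = 0"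
proof -
  have "jpart n (sum a {..<n-1}) 0 f = jzero" using assms unfolding N0_def by auto
  hence "jpart n (sum a {..<n-1}) 0 f a (\<lambda>_. 0) l = 0" by (simp add: jzero_def)
  thus "f a (\<lambda>_. 0) l = 0" by (simp add: jpart_def)
  have "lap' n (jpart n 1 1 f) (\<lambda>_. 0) (\<lambda>_. 0) l = 0" using assms unfolding N0_def by (simp add: jzero_def)
  thus "(\<Sum>j<n-1. f (unitidx j) (unitidx j) l) = 0"
    unfolding lap'_def dw_def dwb_def jpart_def by (simp add: unitidx_upd sum_unitidx cong: if_cong)
qed

lemma upd_eq: "a(j := a j + 1) = (\<lambda>i. a i + unitidx j i)"
  unfolding unitidx_def by (rule ext) simp

lemma upd_nz:
  assumes "f \<in> JE n" "j < n - 1" "jpart n 1 1 f (a(j := a j + 1)) (b(j := b j + 1)) l \<noteq> 0"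
  shows "a = (\<lambda>_. 0) \<and> b = (\<lambda>_. 0)"
proof -
  have s: "sum (a(j := a j + 1)) {..<n-1} = 1" "sum (b(j := b j + 1)) {..<n-1} = 1"
   and nz: "f (a(j := a j + 1)) (b(j := b j + 1)) l \<noteq> 0"
    using assms(3) unfolding jpart_def by (meson)+
  have v: "vidx n (a(j := a j + 1))" "vidx n (b(j := b j + 1))" using nz assms(1) unfolding JE_def by blast+
  have "sum (a(j := a j + 1)) {..<n-1} = sum a {..<n-1} + sum (unitidx j) {..<n-1}"
    unfolding upd_eq by (rule sum.distrib)
  hence sa: "sum a {..<n-1} = 0" using s(1) sum_unitidx[OF assms(2)] by linarith
  have "sum (b(j := b j + 1)) {..<n-1} = sum b {..<n-1} + sum (unitidx j) {..<n-1}"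
    unfolding upd_eq by (rule sum.distrib)
  hence sb: "sum b {..<n-1} = 0" using s(2) sum_unitidx[OF assms(2)] by linarith
  have "vidx n a" unfolding vidx_def
  proof (intro allI impI)
    fix i assume i: "n - 1 \<le> i"
    hence "i \<noteq> j" using assms(2) by simp
    hence "a i = (a(j := a j + 1)) i" by simp
    also have "\<dots> = 0" using v(1) i unfolding vidx_def by blast
    finally show "a i = 0" .
  qed
  moreover have "vidx n b" unfolding vidx_def
  proof (intro allI impI)
    fix i assume i: "n - 1 \<le> i"
    hence "i \<noteq> j" using assms(2) by simp
    hence "b i = (b(j := b j + 1)) i" by simp
    also have "\<dots> = 0" using v(2) i unfolding vidx_def by blast
    finally show "b i = 0" .
  qed
  ultimately show ?thesis using sa sb vidx_sum0 by blast
qed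

lemma N0_I:
  assumes "f \<in> JE n" "\<And>a l. f a (\<lambda>_. 0) l = 0" "\<And>l. (\<Sum>j<n-1. f (unitidx j) (unitidx j) l) = 0"
  shows "f \<in> N0 n"
  unfolding N0_def
proof (intro CollectI conjI allI impI assms(1))
  fix p q :: nat assume "min p q = 0"
  show "jpart n p q f = jzero" unfolding jpart_def jzero_def
  proof (intro ext)
    fix a b l
    show "(if sum a {..<n - 1} = p \<and> sum b {..<n - 1} = q then f a b l else 0) = 0"
    proof (cases "f a b l = 0")
      case False
      hence v: "vidx n a" "vidx n b" using assms(1) unfolding JE_def by blast+
      have sym: "f a b l = cnj (f b a l)" using assms(1) unfolding JE_def by blast
      show ?thesis
      proof (cases "sum a {..<n - 1} = p \<and> sum b {..<n - 1} = q")
        case True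
        show ?thesis
        proof (cases "p = 0")
          case True
          hence "a = (\<lambda>_. 0)" using vidx_sum0[OF v(1)] \<open>sum a {..<n - 1} = p \<and> sum b {..<n - 1} = q\<close> by blast
          hence "f a b l = 0" using sym assms(2)[of b l] by simp
          thus ?thesis by simp
        next
          case False
          hence "q = 0" using \<open>min p q = 0\<close> by simp
          hence "b = (\<lambda>_. 0)" using vidx_sum0[OF v(2)] \<open>sum a {..<n - 1} = p \<and> sum b {..<n - 1} = q\<close> by blast
          hence "f a b l = 0" using assms(2)[of a l] by simp
          thus ?thesis by simp
        qed
      qed (simp only: if_not_P if_False)
    qed simp
  qed
next
  show "lap' n (jpart n 1 1 f) = jzero" unfolding jzero_def
  proof (intro ext)
    fix a b l
    show "lap' n (jpart n 1 1 f) a b l = 0"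
    proof (cases "a = (\<lambda>_. 0) \<and> b = (\<lambda>_. 0)")
      case True
      then show ?thesis using assms(3)[of l]
        unfolding lap'_def dw_def dwb_def jpart_def by (simp add: unitidx_upd sum_unitidx cong: if_cong)
    next
      case False
      show ?thesis unfolding lap'_def
      proof (intro sum.neutral ballI)
        fix j assume "j \<in> {..<n-1}"
        hence "jpart n 1 1 f (a(j := a j + 1)) (b(j := b j + 1)) l = 0"
          using upd_nz[OF assms(1)] False by blast
        thus "dw j (dwb j (jpart n 1 1 f)) a b l = 0" by (simp add: dw_def dwb_def)
      qed
    qed
  qed
qed

lemma cre: "(z + cnj z) / 2 = complex_of_real (Re z)"
  by (simp add: complex_add_cnj)

lemma realval: "z = cnj z \<Longrightarrow> z = complex_of_real (Re z)"
  by (simp add: complex_eq_iff)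

lemma test1: "Re ((complex_of_real x + \<i> * complex_of_real y) * of_nat m / (2 * \<i>)) = real m * y / 2"
  by (simp add: Re_divide field_simps)

lemma Re_mult_nat: "Re (z * of_nat m) = Re z * real m" 
  by (induction m) (simp_all add: distrib_left)

lemma N0_zero: "jzero \<in> N0 n"
  by (rule N0_I[OF JE_zero]) (simp_all add: jzero_def)

lemma N0_add: assumes "f \<in> N0 n" "g \<in> N0 n" shows "jadd f g \<in> N0 n"
proof (rule N0_I)
  show "jadd f g \<in> JE n" using assms JE_add unfolding N0_def by blast
  show "jadd f g a (\<lambda>_. 0) l = 0" for a l using N0_D(1)[OF assms(1)] N0_D(1)[OF assms(2)] by (simp add: jadd_def)
  show "(\<Sum>j<n-1. jadd f g (unitidx j) (unitidx j) l) = 0" for l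
    using N0_D(2)[OF assms(1)] N0_D(2)[OF assms(2)] by (simp add: jadd_def sum.distrib)
qed

lemma N0_scale: assumes "f \<in> N0 n" shows "jscale (complex_of_real c) f \<in> N0 n"
proof (rule N0_I)
  show "jscale (complex_of_real c) f \<in> JE n" using assms JE_scale unfolding N0_def by blast
  show "jscale (complex_of_real c) f a (\<lambda>_. 0) l = 0" for a l using N0_D(1)[OF assms(1)] by (simp add: jscale_def)
  show "(\<Sum>j<n-1. jscale (complex_of_real c) f (unitidx j) (unitidx j) l) = 0" for l
    using N0_D(2)[OF assms(1)] by (simp add: jscale_def flip: sum_distrib_left)
qed

lemma N0_JP_zero:
  assumes n: "2 \<le> n" and hN: "jRe (hser n A) \<in> N0 n"
  shows "jRe (hser n A) = jzero"
proof -
  define G where "G = hser n A"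
  define h where "h = jRe G"
  have hv: "h a b l = (G a b l + cnj (G b a l)) / 2" for a b l by (simp add: h_def jRe_def)
  have h0: "h a (\<lambda>_. 0) l = 0" for a l using N0_D(1)[OF hN] by (simp add: h_def G_def)
  have htr: "(\<Sum>j<n-1. h (unitidx j) (unitidx j) l) = 0" for l using N0_D(2)[OF hN] by (simp add: h_def G_def)
  have U1: "A a l = 0" if "vidx n a" "a \<noteq> (\<lambda>_. 0)" for a l
  proof -
    have "h a (\<lambda>_. 0) l = A a l * (2 * \<i>) ^ l / 2" using hv G1[OF that(1)] G2[OF that(2)] by (simp add: G_def)
    thus ?thesis using h0[of a l] by simp
  qed
  have U2: "Re (A (\<lambda>_. 0) l * (2 * \<i>) ^ l) = 0" for l
  proof -
    have "h (\<lambda>_. 0) (\<lambda>_. 0) l = (G (\<lambda>_. 0) (\<lambda>_. 0) l + cnj (G (\<lambda>_. 0) (\<lambda>_. 0) l)) / 2" by (rule hv)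
    also have "\<dots> = complex_of_real (Re (G (\<lambda>_. 0) (\<lambda>_. 0) l))" by (rule cre)
    also have "G (\<lambda>_. 0) (\<lambda>_. 0) l = A (\<lambda>_. 0) l * (2 * \<i>) ^ l" unfolding G_def by (rule G1[OF vidx_zero])
    finally have e: "h (\<lambda>_. 0) (\<lambda>_. 0) l = complex_of_real (Re (A (\<lambda>_. 0) l * (2 * \<i>) ^ l))" .
    have "complex_of_real (Re (A (\<lambda>_. 0) l * (2 * \<i>) ^ l)) = 0" using e h0[of "\<lambda>_. 0" l] by metis
    thus ?thesis by (simp only: of_real_eq_0_iff)
  qed
  have U3: "A (\<lambda>_. 0) (Suc l) = 0" for l
  proof -
    define z where "z = A (\<lambda>_. 0) (Suc l) * (2 * \<i>) ^ l"
    have "(\<Sum>j<n-1. h (unitidx j) (unitidx j) l) = (\<Sum>j<n-1. complex_of_real (Re (z * of_nat (Suc l))))"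
    proof (intro sum.cong refl)
      fix j assume "j \<in> {..<n-1}"
      hence "G (unitidx j) (unitidx j) l = z * of_nat (Suc l)" using G3[of j n A l] by (simp add: G_def z_def)
      moreover have "h (unitidx j) (unitidx j) l = complex_of_real (Re (G (unitidx j) (unitidx j) l))"
        by (simp only: hv cre)
      ultimately show "h (unitidx j) (unitidx j) l = complex_of_real (Re (z * of_nat (Suc l)))" by simp
    qed
    also have "\<dots> = of_nat (n-1) * complex_of_real (Re (z * of_nat (Suc l)))" by simp
    finally have e: "of_nat (n-1) * complex_of_real (Re (z * of_nat (Suc l))) = 0" using htr by simp
    have "(of_nat (n-1) :: complex) \<noteq> 0" using n by simp
    hence "complex_of_real (Re (z * of_nat (Suc l))) = 0" using e by (simp only: mult_eq_0_iff) blast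
    hence "Re (z * of_nat (Suc l)) = 0" by (simp only: of_real_eq_0_iff)
    hence r1: "Re z = 0" by (simp only: Re_mult_nat) simp
    have "Re (z * (2 * \<i>)) = 0" using U2[of "Suc l"] by (simp add: z_def mult_ac)
    hence "Im z = 0" by simp
    hence "z = 0" using r1 complex_eq_iff by auto
    thus ?thesis by (simp add: z_def)
  qed
  have U4: "G a b l = 0" if ne: "\<not> (a = (\<lambda>_. 0) \<and> b = (\<lambda>_. 0) \<and> l = 0)" for a b l
  proof (rule ccontr)
    assume nz: "G a b l \<noteq> 0"
    define c where "c = (\<lambda>i. a i - b i)"
    define k where "k = sum b {..<n-1} + l"
    have v: "vidx n c" and ht: "hterm n c k a b l \<noteq> 0" and Anz: "A c k \<noteq> 0"
      using nz by (auto simp: G_def hser_eq c_def k_def split: if_splits)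
    note s = hterm_support[OF ht]
    show False
    proof (cases "c = (\<lambda>_. 0)")
      case False thus False using U1[OF v False] Anz by simp
    next
      case True
      have ab: "b = a" using s True by simp
      show False
      proof (cases k)
        case 0
        hence "sum b {..<n-1} = 0" "l = 0" by (auto simp: k_def)
        hence "b = (\<lambda>_. 0)" using vidx_sum0 s by blast
        thus False using ne ab \<open>l = 0\<close> by simp
      next
        case (Suc m)
        thus False using U3[of m] Anz True by simp
      qed
    qed
  qed
  have "h = jzero"
  proof (intro ext)
    fix a b l
    show "h a b l = jzero a b l"
    proof (cases "a = (\<lambda>_. 0) \<and> b = (\<lambda>_. 0) \<and> l = 0")
      case True thus ?thesis using h0 by (simp add: jzero_def)
    next
      case False
      hence "\<not> (b = (\<lambda>_. 0) \<and> a = (\<lambda>_. 0) \<and> l = 0)" by blast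
      hence "G b a l = 0" by (rule U4)
      moreover have "G a b l = 0" using False by (rule U4)
      ultimately show ?thesis using hv[of a b l] by (simp add: jzero_def)
    qed
  qed
  thus ?thesis by (simp add: h_def G_def)
qed

lemma exist:
  assumes n: "2 \<le> n" and f: "f \<in> JE n"
  shows "\<exists>A. jadd f (jscale (-1) (jRe (hser n A))) \<in> N0 n"
proof -
  define N where "N = n - 1"
  have N: "N \<ge> 1" using n by (simp add: N_def)
  define \<tau> where "\<tau> l = Re (\<Sum>j<n-1. f (unitidx j) (unitidx j) l)" for l
  define B where "B k = complex_of_real (Re (f (\<lambda>_. 0) (\<lambda>_. 0) k))
      + \<i> * complex_of_real (2 * \<tau> (k - 1) / (real N * real k))" for k
  define A where "A \<alpha> k = (if \<alpha> = (\<lambda>_. 0) then B k / (2 * \<i>) ^ k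
      else 2 * f \<alpha> (\<lambda>_. 0) k / (2 * \<i>) ^ k)" for \<alpha> k
  define G where "G = hser n A"
  define h where "h = jRe G"
  define g where "g = jadd f (jscale (-1) h)"
  have hJE: "h \<in> JE n" using JP_JE h_def G_def by simp
  have gJE: "g \<in> JE n" unfolding g_def using JE_add[OF f JE_scale[OF hJE, of "-1"]] by simp
  have hv: "h a b l = (G a b l + cnj (G b a l)) / 2" for a b l by (simp add: h_def jRe_def)
  have fsym: "f a b l = cnj (f b a l)" for a b l using f unfolding JE_def by blast
  have freal: "f a a l = complex_of_real (Re (f a a l))" for a l by (rule realval[OF fsym])
  have c1: "h a (\<lambda>_. 0) l = f a (\<lambda>_. 0) l" for a l
  proof (cases "vidx n a")
    case False
    hence "f a (\<lambda>_. 0) l = 0" "h a (\<lambda>_. 0) l = 0" using f hJE unfolding JE_def by blast+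
    thus ?thesis by simp
  next
    case True
    show ?thesis
    proof (cases "a = (\<lambda>_. 0)")
      case False
      have "h a (\<lambda>_. 0) l = (G a (\<lambda>_. 0) l + cnj (G (\<lambda>_. 0) a l)) / 2" by (rule hv)
      also have "G a (\<lambda>_. 0) l = A a l * (2 * \<i>) ^ l" unfolding G_def by (rule G1[OF True])
      also have "G (\<lambda>_. 0) a l = 0" unfolding G_def by (rule G2[OF False])
      also have "(A a l * (2 * \<i>) ^ l + cnj 0) / 2 = f a (\<lambda>_. 0) l" using False by (simp add: A_def)
      finally show ?thesis .
    next
      case True
      have "h a (\<lambda>_. 0) l = (G a (\<lambda>_. 0) l + cnj (G (\<lambda>_. 0) a l)) / 2" by (rule hv)
      also have "\<dots> = complex_of_real (Re (G (\<lambda>_. 0) (\<lambda>_. 0) l))" using True by (simp only: cre)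
      also have "G (\<lambda>_. 0) (\<lambda>_. 0) l = A (\<lambda>_. 0) l * (2 * \<i>) ^ l" unfolding G_def by (rule G1[OF vidx_zero])
      also have "A (\<lambda>_. 0) l * (2 * \<i>) ^ l = B l" by (simp add: A_def)
      also have "complex_of_real (Re (B l)) = complex_of_real (Re (f (\<lambda>_. 0) (\<lambda>_. 0) l))" by (simp add: B_def)
      also have "\<dots> = f (\<lambda>_. 0) (\<lambda>_. 0) l" using freal by metis
      finally show ?thesis using True by simp
    qed
  qed
  have fsum_real: "(\<Sum>j<n-1. f (unitidx j) (unitidx j) l) = complex_of_real (\<tau> l)" for l
  proof -
    have "cnj (\<Sum>j<n-1. f (unitidx j) (unitidx j) l) = (\<Sum>j<n-1. f (unitidx j) (unitidx j) l)"
      by (simp only: cnj_sum) (metis fsym)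
    thus ?thesis unfolding \<tau>_def by (metis realval)
  qed
  have c2: "(\<Sum>j<n-1. h (unitidx j) (unitidx j) l) = (\<Sum>j<n-1. f (unitidx j) (unitidx j) l)" for l
  proof -
    define z where "z = A (\<lambda>_. 0) (Suc l) * (of_nat (Suc l) * (2 * \<i>) ^ l)"
    have "(\<Sum>j<n-1. h (unitidx j) (unitidx j) l) = (\<Sum>j<n-1. complex_of_real (Re z))"
    proof (intro sum.cong refl)
      fix j assume "j \<in> {..<n-1}"
      hence "G (unitidx j) (unitidx j) l = z" unfolding G_def z_def by (intro G3) simp
      moreover have "h (unitidx j) (unitidx j) l = complex_of_real (Re (G (unitidx j) (unitidx j) l))"
        by (simp only: hv cre)
      ultimately show "h (unitidx j) (unitidx j) l = complex_of_real (Re z)" by simp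
    qed
    also have "\<dots> = of_nat N * complex_of_real (Re z)" by (simp add: N_def)
    also have "z = B (Suc l) * of_nat (Suc l) / (2 * \<i>)" by (simp add: z_def A_def field_simps)
    also have "Re (B (Suc l) * of_nat (Suc l) / (2 * \<i>)) = real (Suc l) * (2 * \<tau> l / (real N * real (Suc l))) / 2"
      unfolding B_def by (simp only: test1 diff_Suc_1)
    also have "\<dots> = \<tau> l / real N" using N by (simp add: field_simps del: of_nat_Suc)
    also have "of_nat N * complex_of_real (\<tau> l / real N) = complex_of_real (\<tau> l)" using N
      by (simp add: field_simps)
    finally show ?thesis using fsum_real by simp
  qed
  have "g \<in> N0 n"
  proof (rule N0_I[OF gJE])
    show "g a (\<lambda>_. 0) l = 0" for a l using c1[of a l] by (simp add: g_def jadd_def jscale_def)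
    show "(\<Sum>j<n-1. g (unitidx j) (unitidx j) l) = 0" for l
      using c2[of l] by (simp add: g_def jadd_def jscale_def sum_subtractf)
  qed
  thus ?thesis unfolding g_def h_def G_def by blast
qed

lemma JP_sub: "real_subspace (JP n)"
  unfolding real_subspace_def
proof (intro conjI ballI allI)
  show "jzero \<in> JP n" unfolding JP_def using hser_zero[of n] jRe_zero by (metis (mono_tags, lifting) mem_Collect_eq)
next
  fix f g assume "f \<in> JP n" "g \<in> JP n"
  then obtain A1 A2 where "f = jRe (hser n A1)" "g = jRe (hser n A2)" unfolding JP_def by blast
  hence "jadd f g = jRe (hser n (\<lambda>\<alpha> k. A1 \<alpha> k + A2 \<alpha> k))" by (simp add: hser_add jRe_add)
  thus "jadd f g \<in> JP n" unfolding JP_def by blast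
next
  fix c :: real and f assume "f \<in> JP n"
  then obtain A1 where "f = jRe (hser n A1)" unfolding JP_def by blast
  hence "jscale (complex_of_real c) f = jRe (hser n (\<lambda>\<alpha> k. complex_of_real c * A1 \<alpha> k))" by (simp add: hser_scale jRe_scale)
  thus "jscale (complex_of_real c) f \<in> JP n" unfolding JP_def by blast
qed

lemma N0_sub: "real_subspace (N0 n)"
  unfolding real_subspace_def using N0_zero N0_add N0_scale by blast

lemma uniq:
  assumes n: "2 \<le> n" and g: "g1 \<in> N0 n" "g2 \<in> N0 n" and h: "h1 \<in> JP n" "h2 \<in> JP n"
    and eq: "jadd g1 h1 = jadd g2 h2"
  shows "g1 = g2 \<and> h1 = h2"
proof -
  obtain A1 A2 where hA: "h1 = jRe (hser n A1)" "h2 = jRe (hser n A2)" using h unfolding JP_def by blast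
  define D where "D = (\<lambda>\<alpha> k. A1 \<alpha> k + (-1) * A2 \<alpha> k)"
  have "hser n D = jadd (hser n A1) (jscale (-1) (hser n A2))"
    unfolding D_def hser_add hser_scale by simp
  hence dv: "jRe (hser n D) a b l = h1 a b l - h2 a b l" for a b l
    unfolding hA by (simp add: jRe_def jadd_def jscale_def field_simps)
  have pe: "g1 a b l + h1 a b l = g2 a b l + h2 a b l" for a b l
    using fun_cong[OF fun_cong[OF fun_cong[OF eq]], of a b l] by (simp add: jadd_def)
  have "jRe (hser n D) = jadd g2 (jscale (complex_of_real (-1)) g1)"
  proof (intro ext)
    fix a b l show "jRe (hser n D) a b l = jadd g2 (jscale (complex_of_real (-1)) g1) a b l"
    proof -
      have "h1 a b l - h2 a b l = g2 a b l - g1 a b l" using pe[of a b l] by (simp add: algebra_simps)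
      thus ?thesis using dv[of a b l] by (simp add: jadd_def jscale_def)
    qed
  qed
  moreover have "jadd g2 (jscale (complex_of_real (-1)) g1) \<in> N0 n" using N0_add N0_scale g by blast
  ultimately have "jRe (hser n D) = jzero" using N0_JP_zero n by metis
  hence d0: "h1 a b l = h2 a b l" for a b l using dv[of a b l] by (simp add: jzero_def fun_eq_iff)
  hence "g1 a b l = g2 a b l" for a b l using pe[of a b l] by simp
  with d0 show ?thesis by (simp add: fun_eq_iff)
qed

theorem mainTheorem9:
  fixes n :: nat
  assumes "2 \<le> n"
  shows "real_subspace (JE n) \<and> real_subspace (N0 n) \<and> real_subspace (JP n)
         \<and> N0 n \<subseteq> JE n \<and> JP n \<subseteq> JE n
         \<and> (\<forall>f\<in>JE n. \<exists>!gh. fst gh \<in> N0 n \<and> snd gh \<in> JP n \<and> f = jadd (fst gh) (snd gh))"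
proof (intro conjI ballI)
  show "real_subspace (JE n)" by (rule JE_sub)
  show "real_subspace (N0 n)" by (rule N0_sub)
  show "real_subspace (JP n)" by (rule JP_sub)
  show "N0 n \<subseteq> JE n" unfolding N0_def by blast
  show "JP n \<subseteq> JE n" unfolding JP_def using JP_JE by blast
next
  fix f assume f: "f \<in> JE n"
  show "\<exists>!gh. fst gh \<in> N0 n \<and> snd gh \<in> JP n \<and> f = jadd (fst gh) (snd gh)"
  proof (rule ex_ex1I)
    obtain A where A: "jadd f (jscale (-1) (jRe (hser n A))) \<in> N0 n" using exist[OF assms f] by blast
    have "f = jadd (jadd f (jscale (-1) (jRe (hser n A)))) (jRe (hser n A))"
      by (simp add: jadd_def jscale_def)
    moreover have "jRe (hser n A) \<in> JP n" unfolding JP_def by blast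
    ultimately show "\<exists>gh. fst gh \<in> N0 n \<and> snd gh \<in> JP n \<and> f = jadd (fst gh) (snd gh)"
      using A by (intro exI[of _ "(jadd f (jscale (-1) (jRe (hser n A))), jRe (hser n A))"]) simp
  next
    fix x y assume x: "fst x \<in> N0 n \<and> snd x \<in> JP n \<and> f = jadd (fst x) (snd x)"
      and y: "fst y \<in> N0 n \<and> snd y \<in> JP n \<and> f = jadd (fst y) (snd y)"
    hence "fst x = fst y \<and> snd x = snd y" using uniq[OF assms] by metis
    thus "x = y" by (simp add: prod_eq_iff)
  qed
qed

end
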